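(* Let $G=G(k,m,P)$ be a random intersection graph with set sizes $X_1,\dots,X_k$. For any integers $x_1,\dots,x_k$ such that the event $B=\{X_1=x_1,\dots,X_k=x_k\}$ has positive probability, $$\mathbb P\big(G\text{ has a rainbow }K_k\,\big|\,B\big)\le m^{-k(k-1)/2}(x_1x_2\cdots x_k)^{k-1}.$$
   Context: Random intersection graph: given positive integers $k,m$ and a probability measure $P$ on $\{0,\dots,m\}$, $G(k,m,P)$ has vertex set $[k]$ and attribute set $W$ with $|W|=m$; independent random subsets $S_1,\dots,S_k\subseteq W$ with $\mathbb P(S_v=S)=P(|S|)/\binom{m}{|S|}$; distinct $u,v$ adjacent iff $S_u\cap S_v\ne\emptyset$; $X_v=|S_v|$. "$G$ has a rainbow $K_k$" means there is an injective assignment of attributes to the $\binom k2$ pairs of vertices such that the attribute assigned to each pair $\{u,v\}$ lies in $S_u\cap S_v$. *)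

theory Defs
  imports "HOL-Probability.Probability"
begin

text \<open>Distribution of a single random attribute set S_v in G(k,m,P):
  P(S_v = S) = P(|S|) / binom(m, |S|) for S a subset of the attribute set W (|W| = m).
  (This is a genuine pmf whenever W is finite with |W| = m and P is supported on {0..m}.)\<close>
definition rig_set_pmf :: "'a set \<Rightarrow> nat pmf \<Rightarrow> 'a set pmf" where
  "rig_set_pmf W P = embed_pmf (\<lambda>S. if S \<subseteq> W then pmf P (card S) / real (card W choose card S) else 0)"

definition rig_pmf :: "nat \<Rightarrow> 'a set \<Rightarrow> nat pmf \<Rightarrow> (nat \<Rightarrow> 'a set) pmf" where
  "rig_pmf k W P = Pi_pmf {..<k} {} (\<lambda>_. rig_set_pmf W P)"

text \<open>The graph on vertices {0..<k} given by the sets S has a rainbow K_k: an injective assignment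
  of attributes to the pairs {u,v} (encoded as (u,v) with u < v < k) with the attribute of {u,v}
  lying in S u \<inter> S v.\<close>
definition rainbow_clique :: "nat \<Rightarrow> (nat \<Rightarrow> 'a set) \<Rightarrow> bool" where
  "rainbow_clique k S \<longleftrightarrow>
     (\<exists>f :: nat \<times> nat \<Rightarrow> 'a. inj_on f {(u, v). u < v \<and> v < k} \<and>
        (\<forall>u v. u < v \<and> v < k \<longrightarrow> f (u, v) \<in> S u \<inter> S v))"

end

theory Submission
  imports Defs
begin

lemma rig_set_pmf_pmf:
  assumes fin: "finite W" and sP: "set_pmf P \<subseteq> {0..card W}"
  shows "pmf (rig_set_pmf W P) S = (if S \<subseteq> W then pmf P (card S) / real (card W choose card S) else 0)"
proof -
  define f where "f = (\<lambda>S. if S \<subseteq> W then pmf P (card S) / real (card W choose card S) else 0)"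
  have nn: "\<And>S. 0 \<le> f S" by (simp add: f_def)
  have "(\<Sum>S\<in>Pow W. f S) = (\<Sum>j\<in>{0..card W}. \<Sum>S\<in>{S. S \<in> Pow W \<and> card S = j}. f S)"
    by (rule sum.group[symmetric]) (auto simp: fin card_mono)
  also have "\<dots> = (\<Sum>j\<in>{0..card W}. pmf P j)"
  proof (rule sum.cong[OF refl])
    fix j assume j: "j \<in> {0..card W}"
    have "(\<Sum>S\<in>{S. S \<in> Pow W \<and> card S = j}. f S) = (\<Sum>S\<in>{S. S \<subseteq> W \<and> card S = j}. pmf P j / real (card W choose j))"
      by (rule sum.cong) (auto simp: f_def)
    also have "\<dots> = real (card W choose j) * (pmf P j / real (card W choose j))"
      using n_subsets[OF fin, of j] by simp
    also have "\<dots> = pmf P j" using j by simp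
    finally show "(\<Sum>S\<in>{S. S \<in> Pow W \<and> card S = j}. f S) = pmf P j" .
  qed
  also have "\<dots> = 1" by (rule sum_pmf_eq_1) (use sP in auto)
  finally have s1: "(\<Sum>S\<in>Pow W. f S) = 1" .
  have "(\<integral>\<^sup>+S. ennreal (f S) \<partial>count_space UNIV) = (\<Sum>S\<in>Pow W. ennreal (f S))"
    by (rule nn_integral_count_space') (auto simp: fin f_def)
  also have "\<dots> = 1" using s1 nn by (simp add: sum_ennreal)
  finally have "(\<integral>\<^sup>+S. ennreal (f S) \<partial>count_space UNIV) = 1" .
  then show ?thesis unfolding rig_set_pmf_def f_def[symmetric]
    using pmf_embed_pmf[of f S] nn by (simp add: f_def)
qed

lemma choose_bound:
  fixes m x t :: nat
  assumes "t \<le> x" "x \<le> m"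
  shows "real (m - t choose (x - t)) * real m ^ t \<le> real (m choose x) * real x ^ t"
  using assms
proof (induction t)
  case 0 then show ?case by simp
next
  case (Suc t)
  have IH: "real (m - t choose (x - t)) * real m ^ t \<le> real (m choose x) * real x ^ t"
    using Suc by simp
  define n where "n = m - Suc t"
  define j where "j = x - Suc t"
  have mt: "m - t = Suc n" and xt: "x - t = Suc j" using Suc.prems by (auto simp: n_def j_def)
  have id: "real (Suc n) * real (n choose j) = real (Suc n choose Suc j) * real (Suc j)"
    using Suc_times_binomial_eq[of n j] by (metis of_nat_mult)
  have le: "real (Suc j) * real m \<le> real x * real (Suc n)"
  proof -
    have e1: "real (Suc j) = real x - real t" and e2: "real (Suc n) = real m - real t"
      using mt xt Suc.prems by (simp_all add: of_nat_diff[symmetric])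
    have "real t * real x \<le> real t * real m" using Suc.prems by (intro mult_left_mono) auto
    then show ?thesis unfolding e1 e2 by (simp add: algebra_simps)
  qed
  have "real (n choose j) * real m ^ Suc t * real (Suc n)
      = (real (Suc n) * real (n choose j)) * (real m * real m ^ t)"
    by (simp only: power_Suc mult_ac)
  also have "\<dots> = (real (Suc n choose Suc j) * real (Suc j)) * (real m * real m ^ t)"
    by (simp only: id)
  also have "\<dots> = real (Suc n choose Suc j) * (real (Suc j) * real m) * real m ^ t"
    by (simp only: mult_ac)
  also have "\<dots> \<le> real (Suc n choose Suc j) * (real x * real (Suc n)) * real m ^ t"
    by (intro mult_right_mono mult_left_mono le) auto
  also have "\<dots> = (real (m - t choose (x - t)) * real m ^ t) * real x * real (Suc n)"
    by (simp only: mt xt mult_ac)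
  also have "\<dots> \<le> (real (m choose x) * real x ^ t) * real x * real (Suc n)"
    by (intro mult_right_mono IH) auto
  finally have "real (n choose j) * real m ^ Suc t * real (Suc n)
      \<le> (real (m choose x) * real x ^ Suc t) * real (Suc n)"
    by (simp add: algebra_simps)
  then have "real (n choose j) * real m ^ Suc t \<le> real (m choose x) * real x ^ Suc t"
    by (rule mult_right_le_imp_le) auto
  then show ?case by (simp add: n_def j_def)
qed


lemma card_sup_subsets:
  assumes fin: "finite W" and T: "T \<subseteq> W" and tx: "card T \<le> x"
  shows "card {S. S \<subseteq> W \<and> card S = x \<and> T \<subseteq> S} = (card W - card T) choose (x - card T)"
proof -
  have fT: "finite T" using fin T finite_subset by blast
  have "bij_betw (\<lambda>S. S - T) {S. S \<subseteq> W \<and> card S = x \<and> T \<subseteq> S} {U. U \<subseteq> W - T \<and> card U = x - card T}"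
  proof (rule bij_betwI[where g = "\<lambda>U. U \<union> T"])
    show "(\<lambda>S. S - T) \<in> {S. S \<subseteq> W \<and> card S = x \<and> T \<subseteq> S} \<rightarrow> {U. U \<subseteq> W - T \<and> card U = x - card T}"
      using fT by (auto simp: card_Diff_subset)
    show "(\<lambda>U. U \<union> T) \<in> {U. U \<subseteq> W - T \<and> card U = x - card T} \<rightarrow> {S. S \<subseteq> W \<and> card S = x \<and> T \<subseteq> S}"
    proof
      fix U assume "U \<in> {U. U \<subseteq> W - T \<and> card U = x - card T}"
      then have U: "U \<subseteq> W - T" "card U = x - card T" by auto
      have "finite U" using U fin finite_subset by blast
      then have "card (U \<union> T) = card U + card T" using U fT by (subst card_Un_disjoint) auto
      then have "card (U \<union> T) = x" using U tx by simp
      then show "U \<union> T \<in> {S. S \<subseteq> W \<and> card S = x \<and> T \<subseteq> S}" using U T by auto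
    qed
  qed auto
  then have "card {S. S \<subseteq> W \<and> card S = x \<and> T \<subseteq> S} = card {U. U \<subseteq> W - T \<and> card U = x - card T}"
    by (rule bij_betw_same_card)
  also have "\<dots> = card (W - T) choose (x - card T)" using fin by (simp add: n_subsets)
  also have "card (W - T) = card W - card T" using T fT by (simp add: card_Diff_subset)
  finally show ?thesis .
qed

lemma prob_card:
  assumes fin: "finite W" and sP: "set_pmf P \<subseteq> {0..card W}"
  shows "measure_pmf.prob (rig_set_pmf W P) {S. S \<subseteq> W \<and> card S = x} = pmf P x"
proof -
  have fs: "finite {S. S \<subseteq> W \<and> card S = x}" using fin by auto
  have "measure_pmf.prob (rig_set_pmf W P) {S. S \<subseteq> W \<and> card S = x}
      = (\<Sum>S\<in>{S. S \<subseteq> W \<and> card S = x}. pmf P x / real (card W choose x))"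
    by (subst measure_measure_pmf_finite[OF fs], rule sum.cong)
       (auto simp: rig_set_pmf_pmf[OF fin sP])
  also have "\<dots> = real (card W choose x) * (pmf P x / real (card W choose x))"
    using n_subsets[OF fin, of x] by simp
  also have "\<dots> = pmf P x"
  proof (cases "x \<le> card W")
    case True then show ?thesis by simp
  next
    case False
    then have "x \<notin> set_pmf P" using sP by auto
    then show ?thesis using False by (simp add: set_pmf_eq)
  qed
  finally show ?thesis .
qed

lemma prob_sup:
  assumes fin: "finite W" and sP: "set_pmf P \<subseteq> {0..card W}" and T: "T \<subseteq> W" and m: "card W > 0"
  shows "measure_pmf.prob (rig_set_pmf W P) {S. S \<subseteq> W \<and> card S = x \<and> T \<subseteq> S}
           \<le> (real x / real (card W)) ^ card T * pmf P x"
proof (cases "card T \<le> x \<and> x \<le> card W")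
  case False
  have e: "{S. S \<subseteq> W \<and> card S = x \<and> T \<subseteq> S} = {}"
  proof safe
    fix S assume "S \<subseteq> W" "T \<subseteq> S" "x = card S"
    then show "S \<in> {}" using False fin card_mono finite_subset by metis
  qed
  show ?thesis unfolding e by simp
next
  case True
  define m where "m = card W"
  have fs: "finite {S. S \<subseteq> W \<and> card S = x \<and> T \<subseteq> S}" using fin by auto
  have "measure_pmf.prob (rig_set_pmf W P) {S. S \<subseteq> W \<and> card S = x \<and> T \<subseteq> S}
      = (\<Sum>S\<in>{S. S \<subseteq> W \<and> card S = x \<and> T \<subseteq> S}. pmf P x / real (m choose x))"
    by (subst measure_measure_pmf_finite[OF fs], rule sum.cong)
       (auto simp: rig_set_pmf_pmf[OF fin sP] m_def)
  also have "\<dots> = real (m - card T choose (x - card T)) * (pmf P x / real (m choose x))"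
    using card_sup_subsets[OF fin T, of x] True by (simp add: m_def)
  also have "\<dots> \<le> (real x / real m) ^ card T * pmf P x"
  proof -
    have cpos: "real (m choose x) > 0" using True by (simp add: m_def)
    have mpos: "real m > 0" using m by (simp add: m_def)
    have "real (m - card T choose (x - card T)) * real m ^ card T \<le> real (m choose x) * real x ^ card T"
      using choose_bound[of "card T" x m] True by (simp add: m_def)
    then have "real (m - card T choose (x - card T)) / real (m choose x) \<le> (real x / real m) ^ card T"
      using cpos mpos by (simp add: field_simps power_divide)
    then show ?thesis using pmf_nonneg[of P x]
      by (simp add: mult_right_mono mult.commute mult.left_commute divide_inverse)
        (metis mult.assoc mult.commute mult_right_mono pmf_nonneg times_divide_eq_right divide_inverse)
  qed
  finally show ?thesis by (simp add: m_def)
qed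


lemma card_pairs: "2 * card {(u, v). u < v \<and> v < (k::nat)} = k * (k - 1)"
proof (induction k)
  case 0 then show ?case by simp
next
  case (Suc k)
  have e: "{(u, v). u < v \<and> v < Suc k} = {(u, v). u < v \<and> v < k} \<union> (\<lambda>u. (u, k)) ` {..<k}"
    by auto
  have fin: "finite {(u, v). u < v \<and> v < k}"
    by (rule finite_subset[of _ "{..<k} \<times> {..<k}"]) auto
  have "card {(u, v). u < v \<and> v < Suc k} = card {(u, v). u < v \<and> v < k} + card ((\<lambda>u. (u, k)) ` {..<k})"
    unfolding e by (rule card_Un_disjoint) (use fin in auto)
  also have "card ((\<lambda>u. (u, k)) ` {..<k}) = k" by (subst card_image) (auto simp: inj_on_def)
  finally show ?case using Suc.IH by (cases k) (auto simp: algebra_simps)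
qed

theorem mainTheorem15:
  fixes k m :: nat and W :: "'a set" and P :: "nat pmf" and x :: "nat \<Rightarrow> int"
  assumes "k > 0" and "m > 0"
    and "finite W" and "card W = m"
    and "set_pmf P \<subseteq> {0..m}"
  defines "B \<equiv> {S :: nat \<Rightarrow> 'a set. \<forall>v<k. int (card (S v)) = x v}"
  assumes "measure_pmf.prob (rig_pmf k W P) B > 0"
  shows "measure_pmf.prob (rig_pmf k W P) ({S. rainbow_clique k S} \<inter> B)
           / measure_pmf.prob (rig_pmf k W P) B
         \<le> (\<Prod>v<k. real_of_int (x v)) ^ (k - 1) / real m ^ (k * (k - 1) div 2)"
proof -
  note kpos = assms(1) and mpos = assms(2) and fin = assms(3) and cW = assms(4)
  have sP: "set_pmf P \<subseteq> {0..card W}" using assms(5) cW by simp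
  have mW: "card W > 0" using cW mpos by simp
  define q where "q = rig_set_pmf W P"
  define \<mu> where "\<mu> = rig_pmf k W P"
  have \<mu>_def': "\<mu> = Pi_pmf {..<k} {} (\<lambda>_. q)" by (simp add: \<mu>_def q_def rig_pmf_def)
  have pBpos: "measure_pmf.prob \<mu> B > 0" using assms(7) by (simp add: \<mu>_def)
  then have "B \<noteq> {}" by auto
  then obtain S0 where "S0 \<in> B" by blast
  then have xnn: "\<And>v. v < k \<Longrightarrow> x v \<ge> 0" by (auto simp: B_def)
  define n where "n = (\<lambda>v. nat (x v))"
  have xn: "\<And>v. v < k \<Longrightarrow> x v = int (n v)" using xnn by (simp add: n_def)
  define Pr where "Pr = {(u, v). u < v \<and> v < k}"
  have finPr: "finite Pr" unfolding Pr_def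
    by (rule finite_subset[of _ "{..<k} \<times> {..<k}"]) auto
  define N where "N = k * (k - 1) div 2"
  have cPr: "card Pr = N" using card_pairs[of k] by (simp add: Pr_def N_def)
  have N2: "k * (k - 1) = 2 * N" using card_pairs[of k] cPr by (simp add: Pr_def)
  have sq: "set_pmf q \<subseteq> Pow W"
    by (auto simp: q_def set_pmf_eq rig_set_pmf_pmf[OF fin sP] split: if_splits)
  have supp: "set_pmf \<mu> \<subseteq> PiE_dflt {..<k} {} (\<lambda>_. Pow W)"
    using sq by (auto simp: \<mu>_def' set_Pi_pmf PiE_dflt_def)
  define B' where "B' = PiE_dflt {..<k} {} (\<lambda>v. {S. S \<subseteq> W \<and> card S = n v})"
  have BB': "B \<inter> set_pmf \<mu> = B' \<inter> set_pmf \<mu>"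
    using supp xn by (auto simp: B_def B'_def PiE_dflt_def)
  have hB: "measure_pmf.prob \<mu> B = measure_pmf.prob \<mu> B'"
    by (metis BB' measure_Int_set_pmf)
  have hB': "measure_pmf.prob \<mu> B' = (\<Prod>v<k. pmf P (n v))"
    unfolding B'_def \<mu>_def' by (subst measure_Pi_pmf_PiE_dflt) (auto simp: q_def prob_card[OF fin sP])
  define R where "R = {S :: nat \<Rightarrow> 'a set. rainbow_clique k S}"
  have h1: "measure_pmf.prob \<mu> (R \<inter> B) \<le> measure_pmf.prob \<mu> (R \<inter> B')"
  proof -
    have "measure_pmf.prob \<mu> (R \<inter> B) = measure_pmf.prob \<mu> (R \<inter> B \<inter> set_pmf \<mu>)"
      by (simp add: measure_Int_set_pmf)
    also have "\<dots> \<le> measure_pmf.prob \<mu> (R \<inter> B')"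
      by (rule measure_pmf.finite_measure_mono) (use BB' in auto)
    finally show ?thesis .
  qed
  define F where "F = {f :: nat \<times> nat \<Rightarrow> 'a. f \<in> Pr \<rightarrow>\<^sub>E W \<and> inj_on f Pr}"
  have finF: "finite F" unfolding F_def
    by (rule finite_subset[of _ "Pr \<rightarrow>\<^sub>E W"]) (auto intro!: finite_PiE finPr fin)
  have cF: "card F \<le> m ^ N"
  proof -
    have "card F \<le> card (Pr \<rightarrow>\<^sub>E W)"
      unfolding F_def by (rule card_mono) (auto intro!: finite_PiE finPr fin)
    also have "\<dots> = m ^ N" using finPr by (simp add: card_PiE cW cPr)
    finally show ?thesis .
  qed
  define Tf where "Tf = (\<lambda>(f :: nat \<times> nat \<Rightarrow> 'a) v. (\<lambda>u. f (min u v, max u v)) ` ({..<k} - {v}))"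
  define A where "A = (\<lambda>f. PiE_dflt {..<k} {} (\<lambda>v. {S. S \<subseteq> W \<and> card S = n v \<and> Tf f v \<subseteq> S}))"
  have cover: "R \<inter> B' \<subseteq> (\<Union>f\<in>F. A f)"
  proof
    fix S assume S: "S \<in> R \<inter> B'"
    then obtain g where g: "inj_on g Pr" "\<And>u v. u < v \<and> v < k \<Longrightarrow> g (u, v) \<in> S u \<inter> S v"
      by (auto simp: R_def rainbow_clique_def Pr_def)
    have SW: "\<And>v. v < k \<Longrightarrow> S v \<subseteq> W" and Sn: "\<And>v. v < k \<Longrightarrow> card (S v) = n v"
      and Sd: "\<And>v. v \<ge> k \<Longrightarrow> S v = {}"
      using S by (auto simp: B'_def PiE_dflt_def)
    define f where "f = restrict g Pr"
    have "f \<in> F"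
    proof -
      have "f \<in> Pr \<rightarrow>\<^sub>E W"
      proof
        fix p assume "p \<in> Pr"
        then obtain u v where p: "p = (u, v)" "u < v" "v < k" by (auto simp: Pr_def)
        then show "f p \<in> W" using g(2)[of u v] SW[of u] by (auto simp: f_def Pr_def)
      qed (simp add: f_def)
      moreover have "inj_on f Pr" using g(1) by (simp add: f_def inj_on_def)
      ultimately show ?thesis by (simp add: F_def)
    qed
    moreover have "S \<in> A f"
    proof -
      have "Tf f v \<subseteq> S v" if v: "v < k" for v
      proof
        fix y assume "y \<in> Tf f v"
        then obtain u where u: "u < k" "u \<noteq> v" "y = f (min u v, max u v)" by (auto simp: Tf_def)
        have "(min u v, max u v) \<in> Pr" using u v by (auto simp: Pr_def min_def max_def)
        then have "y = g (min u v, max u v)" using u by (simp add: f_def)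
        moreover have "g (min u v, max u v) \<in> S (min u v) \<inter> S (max u v)"
          using g(2) u v by (auto simp: min_def max_def)
        ultimately show "y \<in> S v" by (cases "u < v") (auto simp: min_def max_def)
      qed
      then show ?thesis using SW Sn Sd by (auto simp: A_def PiE_dflt_def)
    qed
    ultimately show "S \<in> (\<Union>f\<in>F. A f)" by blast
  qed
  have TfW: "Tf f v \<subseteq> W" if "f \<in> F" "v < k" for f v
  proof
    fix y assume "y \<in> Tf f v"
    then obtain u where u: "u < k" "u \<noteq> v" "y = f (min u v, max u v)" by (auto simp: Tf_def)
    have "(min u v, max u v) \<in> Pr" using u that by (auto simp: Pr_def min_def max_def)
    then show "y \<in> W" using that(1) u by (auto simp: F_def)
  qed
  have cTf: "card (Tf f v) = k - 1" if "f \<in> F" "v < k" for f v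
  proof -
    have inj: "inj_on f Pr" using that by (simp add: F_def)
    have "inj_on (\<lambda>u. f (min u v, max u v)) ({..<k} - {v})"
    proof (rule inj_onI)
      fix u u' assume u: "u \<in> {..<k} - {v}" and u': "u' \<in> {..<k} - {v}"
        and eq: "f (min u v, max u v) = f (min u' v, max u' v)"
      have "(min u v, max u v) \<in> Pr" "(min u' v, max u' v) \<in> Pr"
        using u u' that by (auto simp: Pr_def min_def max_def)
      then have "(min u v, max u v) = (min u' v, max u' v)" using inj eq by (auto dest: inj_onD)
      then show "u = u'" using u u' by (auto simp: min_def max_def split: if_splits)
    qed
    then have "card (Tf f v) = card ({..<k} - {v})" unfolding Tf_def by (rule card_image)
    also have "\<dots> = k - 1" using that by simp
    finally show ?thesis .
  qed
  define c where "c = (\<Prod>v<k. (real (n v) / real m) ^ (k - 1) * pmf P (n v))"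
  have hA: "measure_pmf.prob \<mu> (A f) \<le> c" if f: "f \<in> F" for f
  proof -
    have "measure_pmf.prob \<mu> (A f) = (\<Prod>v<k. measure_pmf.prob q {S. S \<subseteq> W \<and> card S = n v \<and> Tf f v \<subseteq> S})"
      unfolding A_def \<mu>_def' by (subst measure_Pi_pmf_PiE_dflt) auto
    also have "\<dots> \<le> c" unfolding c_def
    proof (rule prod_mono)
      fix v assume v: "v \<in> {..<k}"
      show "0 \<le> measure_pmf.prob q {S. S \<subseteq> W \<and> card S = n v \<and> Tf f v \<subseteq> S} \<and>
            measure_pmf.prob q {S. S \<subseteq> W \<and> card S = n v \<and> Tf f v \<subseteq> S} \<le> (real (n v) / real m) ^ (k - 1) * pmf P (n v)"
        using prob_sup[OF fin sP TfW[OF f] mW, of v "n v"] cTf[OF f, of v] v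
        by (auto simp: q_def cW)
    qed
    finally show ?thesis .
  qed
  have h2: "measure_pmf.prob \<mu> (R \<inter> B') \<le> real (m ^ N) * c"
  proof -
    have "measure_pmf.prob \<mu> (R \<inter> B') \<le> measure_pmf.prob \<mu> (\<Union>f\<in>F. A f)"
      by (rule measure_pmf.finite_measure_mono) (use cover in auto)
    also have "\<dots> \<le> (\<Sum>f\<in>F. measure_pmf.prob \<mu> (A f))"
      by (rule measure_pmf.finite_measure_subadditive_finite) (use finF in auto)
    also have "\<dots> \<le> (\<Sum>f\<in>F. c)" by (rule sum_mono) (rule hA)
    also have "\<dots> = real (card F) * c" by simp
    also have "\<dots> \<le> real (m ^ N) * c"
    proof (rule mult_right_mono)
      show "real (card F) \<le> real (m ^ N)" using cF by linarith
      show "0 \<le> c" unfolding c_def by (intro prod_nonneg) auto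
    qed
    finally show ?thesis .
  qed
  define PP where "PP = (\<Prod>v<k. real (n v))"
  have c_eq: "c = PP ^ (k - 1) / real m ^ (2 * N) * measure_pmf.prob \<mu> B"
  proof -
    have "c = (\<Prod>v<k. (real (n v) / real m) ^ (k - 1)) * (\<Prod>v<k. pmf P (n v))"
      unfolding c_def by (rule prod.distrib)
    also have "(\<Prod>v<k. (real (n v) / real m) ^ (k - 1)) = (\<Prod>v<k. real (n v) / real m) ^ (k - 1)"
      by (simp add: prod_power_distrib)
    also have "(\<Prod>v<k. real (n v) / real m) = PP / real m ^ k"
      by (simp add: PP_def prod_dividef)
    also have "(PP / real m ^ k) ^ (k - 1) = PP ^ (k - 1) / real m ^ (2 * N)"
      by (simp only: power_divide power_mult[symmetric] N2)
    finally show ?thesis using hB hB' by simp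
  qed
  have xprod: "(\<Prod>v<k. real_of_int (x v)) = PP"
    unfolding PP_def by (rule prod.cong) (auto simp: xn)
  have mp: "real m ^ (2 * N) = real m ^ N * real m ^ N" by (simp add: power_add[symmetric] mult_2)
  have "measure_pmf.prob \<mu> (R \<inter> B) \<le> real m ^ N * (PP ^ (k - 1) / real m ^ (2 * N) * measure_pmf.prob \<mu> B)"
    using h1 h2 c_eq by simp
  also have "\<dots> = PP ^ (k - 1) / real m ^ N * measure_pmf.prob \<mu> B"
    using mpos unfolding mp by (simp add: field_simps)
  finally have "measure_pmf.prob \<mu> (R \<inter> B) / measure_pmf.prob \<mu> B \<le> PP ^ (k - 1) / real m ^ N"
    using pBpos by (simp add: divide_le_eq)
  then show ?thesis unfolding xprod by (simp add: \<mu>_def R_def N_def)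
qed

end
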